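(* Let $(N,+,* )$ be a nilpotent ring with adjoint operation $x\circ y=x+y+x*y$, let $S$ be a subring and $I$ a two-sided ideal of $N$ with $S\cap I=\{0\}$ and $N=S+I$. Then every $x\in N$ can be written uniquely as $x=s\circ i$ with $s\in S$, $i\in I$; define $x\bullet y=s\circ y\circ i$, so that $(N,+,\bullet)$ is a left brace, and let $r$ be its Yang–Baxter map. Let $X\subseteq N$ be such that $(X,r)$ is a solution of the set-theoretic Yang–Baxter equation. Let $J\subseteq I\cap X$ be a two-sided ideal of the ring $N$. Let $f,g:X\to X$ with $f$ $\mathcal G(X,r)$-equivariant, and let $k_1(x)=f(x)*g(x)$, $k_2(x)=f(x)+f(x)*g(x)$, assuming $k_1(X),k_2(X)\subseteq X$. Suppose that $g(x)*z=z*g(x)$ for all $z\in I$, $x\in X$; that $g(x+j)=g(x)$ whenever $x\in X$, $j\in J$ and $x+j\in X$; and that $k_1(x)-x\in J$ and $k_2(x)-x\in J$ for all $x\in X$. Then $k_1$ and $k_2$ are reflections of $(X,r)$.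
   Context: A (left) brace is a triple $(B,+,\circ)$ with $(B,+)$ abelian group, $(B,\circ)$ group, and $x\circ(y+z)=x\circ y+x\circ z-x$. The Yang–Baxter map of the brace $(N,+,\bullet)$ is $r(x,y)=(\sigma_x(y),\tau_y(x))$ with $\sigma_x(y)=x\bullet y-x$ and $\tau_y(x)=(\sigma_x(y))^{-1}\bullet x-(\sigma_x(y))^{-1}$, inverses taken in $(N,\bullet)$. For $X\subseteq N$, $(X,r)$ is a solution of the set-theoretic Yang–Baxter equation if $r(X\times X)\subseteq X\times X$ and $(\mathrm{id}\times r)(r\times\mathrm{id})(\mathrm{id}\times r)=(r\times\mathrm{id})(\mathrm{id}\times r)(r\times\mathrm{id})$ on $X^3$. A map $k:X\to X$ is a reflection of $(X,r)$ if $r(\mathrm{id}\times k)r(\mathrm{id}\times k)=(\mathrm{id}\times k)r(\mathrm{id}\times k)r$ on $X\times X$; $k$ is $\mathcal G(X,r)$-equivariant if $k\sigma_x=\sigma_x k$ on $X$ for every $x\in X$. *)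

theory Defs
  imports Main
begin

text \<open>The ring N is the whole carrier of a (not necessarily unital, associative) ring type.\<close>

fun nprod :: "'a::ring list \<Rightarrow> 'a" where
  "nprod [] = 0"
| "nprod [x] = x"
| "nprod (x # y # xs) = x * nprod (y # xs)"

definition nilpotent_ring :: "'a::ring itself \<Rightarrow> bool" where
  "nilpotent_ring _ \<longleftrightarrow> (\<exists>n>0. \<forall>xs::'a list. length xs = n \<longrightarrow> nprod xs = 0)"

definition adj :: "'a::ring \<Rightarrow> 'a \<Rightarrow> 'a" where
  "adj x y = x + y + x * y"

definition is_subring :: "'a::ring set \<Rightarrow> bool" where
  "is_subring S \<longleftrightarrow> 0 \<in> S \<and> (\<forall>x\<in>S. \<forall>y\<in>S. x + y \<in> S \<and> x * y \<in> S) \<and> (\<forall>x\<in>S. - x \<in> S)"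

definition is_ideal :: "'a::ring set \<Rightarrow> bool" where
  "is_ideal I \<longleftrightarrow> 0 \<in> I \<and> (\<forall>x\<in>I. \<forall>y\<in>I. x + y \<in> I) \<and> (\<forall>x\<in>I. - x \<in> I)
     \<and> (\<forall>x\<in>I. \<forall>n. n * x \<in> I \<and> x * n \<in> I)"

definition s_part :: "'a::ring set \<Rightarrow> 'a set \<Rightarrow> 'a \<Rightarrow> 'a" where
  "s_part S I x = (THE s. s \<in> S \<and> (\<exists>i\<in>I. x = adj s i))"

definition i_part :: "'a::ring set \<Rightarrow> 'a set \<Rightarrow> 'a \<Rightarrow> 'a" where
  "i_part S I x = (THE i. i \<in> I \<and> (\<exists>s\<in>S. x = adj s i))"

definition bul :: "'a::ring set \<Rightarrow> 'a set \<Rightarrow> 'a \<Rightarrow> 'a \<Rightarrow> 'a" where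
  "bul S I x y = adj (adj (s_part S I x) y) (i_part S I x)"

definition binv :: "'a::ring set \<Rightarrow> 'a set \<Rightarrow> 'a \<Rightarrow> 'a" where
  "binv S I x = (THE z. bul S I z x = 0 \<and> bul S I x z = 0)"

definition sig :: "'a::ring set \<Rightarrow> 'a set \<Rightarrow> 'a \<Rightarrow> 'a \<Rightarrow> 'a" where
  "sig S I x y = bul S I x y - x"

definition tau :: "'a::ring set \<Rightarrow> 'a set \<Rightarrow> 'a \<Rightarrow> 'a \<Rightarrow> 'a" where
  "tau S I y x = bul S I (binv S I (sig S I x y)) x - binv S I (sig S I x y)"

definition ybmap :: "'a::ring set \<Rightarrow> 'a set \<Rightarrow> 'a \<times> 'a \<Rightarrow> 'a \<times> 'a" where
  "ybmap S I p = (sig S I (fst p) (snd p), tau S I (snd p) (fst p))"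

definition r12 :: "('a \<times> 'a \<Rightarrow> 'a \<times> 'a) \<Rightarrow> 'a \<times> 'a \<times> 'a \<Rightarrow> 'a \<times> 'a \<times> 'a" where
  "r12 r t = (case t of (x, y, z) \<Rightarrow> (fst (r (x, y)), snd (r (x, y)), z))"

definition r23 :: "('a \<times> 'a \<Rightarrow> 'a \<times> 'a) \<Rightarrow> 'a \<times> 'a \<times> 'a \<Rightarrow> 'a \<times> 'a \<times> 'a" where
  "r23 r t = (case t of (x, y, z) \<Rightarrow> (x, fst (r (y, z)), snd (r (y, z))))"

definition is_YB_solution :: "'a set \<Rightarrow> ('a \<times> 'a \<Rightarrow> 'a \<times> 'a) \<Rightarrow> bool" where
  "is_YB_solution X r \<longleftrightarrow> r ` (X \<times> X) \<subseteq> X \<times> X \<and>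
     (\<forall>t \<in> X \<times> X \<times> X. r23 r (r12 r (r23 r t)) = r12 r (r23 r (r12 r t)))"

definition idk :: "('a \<Rightarrow> 'a) \<Rightarrow> 'a \<times> 'a \<Rightarrow> 'a \<times> 'a" where
  "idk k p = (fst p, k (snd p))"

definition is_reflection :: "'a set \<Rightarrow> ('a \<times> 'a \<Rightarrow> 'a \<times> 'a) \<Rightarrow> ('a \<Rightarrow> 'a) \<Rightarrow> bool" where
  "is_reflection X r k \<longleftrightarrow>
     (\<forall>p \<in> X \<times> X. r (idk k (r (idk k p))) = idk k (r (idk k (r p))))"

text \<open>G(X,r)-equivariance: k commutes with every \<sigma>_x (x \<in> X) on X.\<close>
definition equivariant :: "'a::ring set \<Rightarrow> 'a set \<Rightarrow> 'a set \<Rightarrow> ('a \<Rightarrow> 'a) \<Rightarrow> bool" where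
  "equivariant S I X k \<longleftrightarrow> (\<forall>x\<in>X. \<forall>y\<in>X. k (sig S I x y) = sig S I x (k y))"

end

theory Submission
  imports Defs
begin

lemma adj_assoc: "adj (adj a b) c = adj a (adj b (c::'a::ring))"
  by (simp add: adj_def algebra_simps)

lemma adj_0l[simp]: "adj 0 x = (x::'a::ring)" by (simp add: adj_def)
lemma adj_0r[simp]: "adj x 0 = (x::'a::ring)" by (simp add: adj_def)

fun ev :: "'a::ring \<Rightarrow> nat \<Rightarrow> 'a" where
  "ev x 0 = 0"
| "ev x (Suc n) = - x - x * ev x n"

lemma ev_comm: "x * ev x n = ev x n * x"
proof (induction n)
  case 0 then show ?case by simp
next
  case (Suc n)
  have "x * ev x (Suc n) = - (x * x) - x * (x * ev x n)" by (simp add: algebra_simps)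
  also have "\<dots> = - (x * x) - x * (ev x n * x)" using Suc by simp
  also have "\<dots> = ev x (Suc n) * x" by (simp add: algebra_simps)
  finally show ?case .
qed

lemma ev_step: "adj x (ev x (Suc n)) = - (x * adj x (ev x n))"
  by (simp add: adj_def algebra_simps)

lemma ev_adj: "adj x (ev x n) = nprod (replicate (Suc n) x) \<or> adj x (ev x n) = - nprod (replicate (Suc n) x)"
proof (induction n)
  case 0 then show ?case by (simp add: adj_def)
next
  case (Suc n)
  have r: "nprod (replicate (Suc (Suc n)) x) = x * nprod (replicate (Suc n) x)" by simp
  from Suc show ?case unfolding ev_step r by auto
qed

lemma ev_S: "is_subring S \<Longrightarrow> x \<in> S \<Longrightarrow> ev x n \<in> S"
proof (induction n)
  case 0 then show ?case by (simp add: is_subring_def)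
next
  case (Suc n)
  then have "x * ev x n \<in> S" "- x \<in> S" by (auto simp: is_subring_def)
  then have "- x + - (x * ev x n) \<in> S" using Suc.prems unfolding is_subring_def by blast
  moreover have "ev x (Suc n) = - x + - (x * ev x n)" by simp
  ultimately show ?case by simp
qed

lemma ev_I: "is_ideal I \<Longrightarrow> x \<in> I \<Longrightarrow> ev x n \<in> I"
proof (induction n)
  case 0 then show ?case by (simp add: is_ideal_def)
next
  case (Suc n)
  then have "x * ev x n \<in> I" "- x \<in> I" by (auto simp: is_ideal_def)
  then have "- x + - (x * ev x n) \<in> I" using Suc.prems unfolding is_ideal_def by blast
  moreover have "ev x (Suc n) = - x + - (x * ev x n)" by simp
  ultimately show ?case by simp
qed

lemma subring_adj: "is_subring S \<Longrightarrow> a \<in> S \<Longrightarrow> b \<in> S \<Longrightarrow> adj a b \<in> S"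
  unfolding adj_def is_subring_def by blast

lemma ideal_adj: "is_ideal I \<Longrightarrow> a \<in> I \<Longrightarrow> b \<in> I \<Longrightarrow> adj a b \<in> I"
  unfolding adj_def is_ideal_def by blast

lemma ideal_diff: "is_ideal I \<Longrightarrow> a \<in> I \<Longrightarrow> b \<in> I \<Longrightarrow> a - b \<in> I"
  unfolding is_ideal_def by (metis diff_conv_add_uminus)


lemma ideal_rho2: "is_ideal I \<Longrightarrow> y \<in> I \<Longrightarrow> y + y * a \<in> I"
  unfolding is_ideal_def by blast

lemma decomp_unique:
  fixes S I :: "'a::ring set"
  assumes inv1: "\<And>x::'a. adj x (ev x m) = 0" and inv2: "\<And>x::'a. adj (ev x m) x = 0"
    and S: "is_subring S" and I: "is_ideal I" and SI: "S \<inter> I = {0}"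
    and s: "s \<in> S" "s' \<in> S" and i: "i \<in> I" "i' \<in> I" and eq: "adj s i = adj s' i'"
  shows "s = s' \<and> i = i'"
proof -
  define a where "a = ev s' m"
  define b where "b = ev i m"
  have aS: "a \<in> S" using ev_S[OF S s(2)] a_def by simp
  have bI: "b \<in> I" using ev_I[OF I i(1)] b_def by simp
  have 1: "adj (adj a s) i = i'"
  proof -
    have "adj (adj a s) i = adj a (adj s' i')" by (simp only: adj_assoc eq)
    also have "\<dots> = adj (adj a s') i'" by (simp only: adj_assoc)
    also have "\<dots> = i'" using inv2[of s'] a_def by simp
    finally show ?thesis .
  qed
  have 2: "adj a s = adj i' b"
  proof -
    have "adj i' b = adj (adj (adj a s) i) b" using 1 by simp
    also have "\<dots> = adj (adj a s) (adj i b)" by (simp only: adj_assoc)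
    also have "\<dots> = adj a s" using inv1[of i] b_def by simp
    finally show ?thesis by simp
  qed
  have "adj a s \<in> S" using subring_adj[OF S aS s(1)] .
  moreover have "adj i' b \<in> I" using ideal_adj[OF I i(2) bI] .
  ultimately have z: "adj a s = 0" using 2 SI by auto
  have "s' = adj s' (adj a s)" using z by simp
  also have "\<dots> = adj (adj s' a) s" by (simp only: adj_assoc)
  also have "\<dots> = s" using inv1[of s'] a_def by simp
  finally have "s = s'" by simp
  moreover have "i = i'" using 1 z by simp
  ultimately show ?thesis by simp
qed

definition Rm :: "('a::ring \<Rightarrow> 'a) \<Rightarrow> 'a \<times> 'a \<Rightarrow> 'a \<times> 'a" where
  "Rm E p = (snd p + snd p * fst p, fst p + fst p * E (snd p + snd p * fst p))"

lemma rho_comp: "(y + y * b) + (y + y * b) * a = y + y * adj b (a::'a::ring)"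
  by (simp add: adj_def algebra_simps)

lemma refl_generic:
  fixes J :: "'a::ring set"
  assumes J: "is_ideal J"
    and EJ: "\<And>w. w \<in> J \<Longrightarrow> E w \<in> J"
    and E2: "\<And>w. adj (E w) w = 0"
    and kJ: "\<And>y. y \<in> J \<Longrightarrow> k y \<in> J"
    and keq: "\<And>z y. z \<in> J \<Longrightarrow> y \<in> J \<Longrightarrow> k (y + y * z) = k y + k y * z"
    and x: "x \<in> J" and y: "y \<in> J"
  shows "Rm E (idk k (Rm E (idk k (x, y)))) = idk k (Rm E (idk k (Rm E (x, y))))"
proof -
  define a where "a = y + y * x"
  have aJ: "a \<in> J" using ideal_rho2[OF J y] a_def by simp
  have ka: "k y + k y * x = k a" using keq[OF x y] a_def by simp
  define u1 where "u1 = k a"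
  have u1J: "u1 \<in> J" using kJ aJ u1_def by simp
  define v1 where "v1 = x + x * E u1"
  have v1J: "v1 \<in> J" using ideal_rho2[OF J x] v1_def by simp
  have u2: "k v1 + k v1 * u1 = k x"
    using keq[OF u1J v1J] unfolding v1_def rho_comp E2 by simp
  have L: "Rm E (idk k (Rm E (idk k (x, y)))) = (k x, k a + k a * E (k x))"
    unfolding Rm_def idk_def using ka u2 u1_def v1_def by simp
  define b where "b = x + x * E a"
  have bJ: "b \<in> J" using ideal_rho2[OF J x] b_def by simp
  have c: "k b + k b * a = k x"
    using keq[OF aJ bJ] unfolding b_def rho_comp E2 by simp
  have kxJ: "E (k x) \<in> J" using EJ kJ x by simp
  have R: "idk k (Rm E (idk k (Rm E (x, y)))) = (k x, k (a + a * E (k x)))"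
    unfolding Rm_def idk_def using c a_def b_def by simp
  show ?thesis unfolding L R using keq[OF kxJ aJ] by simp
qed

theorem mainTheorem8:
  fixes S I J X :: "'a::ring set" and f g :: "'a \<Rightarrow> 'a"
  assumes nil: "nilpotent_ring TYPE('a)"
    and S: "is_subring S" and I: "is_ideal I"
    and SI: "S \<inter> I = {0}" and NSI: "\<forall>x. \<exists>s\<in>S. \<exists>i\<in>I. x = s + i"
    and sol: "is_YB_solution X (ybmap S I)"
    and J: "is_ideal J" and JIX: "J \<subseteq> I \<inter> X"
    and fX: "f ` X \<subseteq> X" and gX: "g ` X \<subseteq> X"
    and feq: "equivariant S I X f"
    and k1X: "(\<lambda>x. f x * g x) ` X \<subseteq> X"
    and k2X: "(\<lambda>x. f x + f x * g x) ` X \<subseteq> X"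
    and gcomm: "\<forall>z\<in>I. \<forall>x\<in>X. g x * z = z * g x"
    and ginv: "\<forall>x\<in>X. \<forall>j\<in>J. x + j \<in> X \<longrightarrow> g (x + j) = g x"
    and k1J: "\<forall>x\<in>X. f x * g x - x \<in> J"
    and k2J: "\<forall>x\<in>X. (f x + f x * g x) - x \<in> J"
  shows "(\<forall>x. \<exists>!p. fst p \<in> S \<and> snd p \<in> I \<and> x = adj (fst p) (snd p))
    \<and> is_reflection X (ybmap S I) (\<lambda>x. f x * g x)
    \<and> is_reflection X (ybmap S I) (\<lambda>x. f x + f x * g x)"
proof -
  obtain n where n: "n > 0" "\<forall>xs::'a list. length xs = n \<longrightarrow> nprod xs = 0"
    using nil unfolding nilpotent_ring_def by blast
  then obtain m where nm: "n = Suc m" by (cases n) auto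
  have inv1: "\<And>x::'a. adj x (ev x m) = 0"
  proof -
    fix x :: 'a
    have "nprod (replicate (Suc m) x) = 0" using n(2) nm by simp
    then show "adj x (ev x m) = 0" using ev_adj[of x m] by auto
  qed
  have inv2: "\<And>x::'a. adj (ev x m) x = 0"
  proof -
    fix x :: 'a
    have "adj (ev x m) x = adj x (ev x m)" unfolding adj_def by (simp add: ev_comm add.commute)
    then show "adj (ev x m) x = 0" using inv1 by simp
  qed
  have uniq: "\<forall>x. \<exists>!p. fst p \<in> S \<and> snd p \<in> I \<and> x = adj (fst p) (snd p)"
  proof
    fix x
    obtain s i where si: "s \<in> S" "i \<in> I" "x = s + i" using NSI by blast
    define a where "a = ev s m"
    have aS: "a \<in> S" using ev_S[OF S si(1)] a_def by simp
    have "adj a x = adj a s + i + a * i" using si(3) by (simp add: adj_def algebra_simps)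
    also have "\<dots> = i + a * i" using inv2 a_def by simp
    finally have ai: "adj a x = i + a * i" .
    have aiI: "adj a x \<in> I" unfolding ai using I si(2) unfolding is_ideal_def by blast
    have "adj s (adj a x) = adj (adj s a) x" by (simp only: adj_assoc)
    also have "\<dots> = x" using inv1[of s] a_def by simp
    finally have "adj s (adj a x) = x" .
    then have ex: "fst (s, adj a x) \<in> S \<and> snd (s, adj a x) \<in> I \<and> x = adj (fst (s, adj a x)) (snd (s, adj a x))"
      using si aiI by simp
    show "\<exists>!p. fst p \<in> S \<and> snd p \<in> I \<and> x = adj (fst p) (snd p)"
    proof (rule ex1I[where a="(s, adj a x)"])
      show "fst (s, adj a x) \<in> S \<and> snd (s, adj a x) \<in> I \<and> x = adj (fst (s, adj a x)) (snd (s, adj a x))"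
        using ex .
    next
      fix p assume p: "fst p \<in> S \<and> snd p \<in> I \<and> x = adj (fst p) (snd p)"
      have h: "adj s (adj a x) = x" by fact
      have e1: "adj (fst p) (snd p) = adj s (adj a x)" using p h by (metis (no_types))
      have "fst p = s \<and> snd p = adj a x"
        by (rule decomp_unique[OF inv1 inv2 S I SI _ si(1) _ aiI e1]) (use p in blast)+
      then show "p = (s, adj a x)" by (simp add: prod_eq_iff)
    qed
  qed
  have S0: "0 \<in> S" using S unfolding is_subring_def by simp
  have spart: "\<And>x. x \<in> I \<Longrightarrow> s_part S I x = 0"
  proof -
    fix x assume x: "x \<in> I"
    show "s_part S I x = 0" unfolding s_part_def
    proof (rule the_equality)
      show "0 \<in> S \<and> (\<exists>i\<in>I. x = adj 0 i)" using S0 x by simp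
    next
      fix s assume "s \<in> S \<and> (\<exists>i\<in>I. x = adj s i)"
      then obtain i where "s \<in> S" "i \<in> I" "x = adj s i" by blast
      then have e: "adj s i = adj 0 x" by simp
      show "s = 0" using decomp_unique[OF inv1 inv2 S I SI \<open>s \<in> S\<close> S0 \<open>i \<in> I\<close> x e] by blast
    qed
  qed
  have ipart: "\<And>x. x \<in> I \<Longrightarrow> i_part S I x = x"
  proof -
    fix x assume x: "x \<in> I"
    show "i_part S I x = x" unfolding i_part_def
    proof (rule the_equality)
      show "x \<in> I \<and> (\<exists>s\<in>S. x = adj s x)" using S0 x by (metis adj_0l)
    next
      fix i assume "i \<in> I \<and> (\<exists>s\<in>S. x = adj s i)"
      then obtain s where "s \<in> S" "i \<in> I" "x = adj s i" by blast
      then have e: "adj s i = adj 0 x" by simp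
      show "i = x" using decomp_unique[OF inv1 inv2 S I SI \<open>s \<in> S\<close> S0 \<open>i \<in> I\<close> x e] by blast
    qed
  qed
  have bulI: "\<And>w y. w \<in> I \<Longrightarrow> bul S I w y = adj y w"
    unfolding bul_def using spart ipart by simp
  have binvI: "\<And>w. w \<in> I \<Longrightarrow> binv S I w = ev w m"
  proof -
    fix w assume w: "w \<in> I"
    have eI: "ev w m \<in> I" using ev_I[OF I w] .
    show "binv S I w = ev w m" unfolding binv_def
    proof (rule the_equality)
      show "bul S I (ev w m) w = 0 \<and> bul S I w (ev w m) = 0"
        using bulI[OF eI] bulI[OF w] inv1 inv2 by simp
    next
      fix z assume "bul S I z w = 0 \<and> bul S I w z = 0"
      then have "adj z w = 0" using bulI[OF w] by simp
      then have "adj (adj z w) (ev w m) = ev w m" by simp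
      then show "z = ev w m" by (simp add: adj_assoc inv1)
    qed
  qed
  have JI: "J \<subseteq> I" and JX: "J \<subseteq> X" using JIX by auto
  have XJ: "X \<subseteq> J"
  proof
    fix x assume x: "x \<in> X"
    have "(f x + f x * g x - x) - (f x * g x - x) \<in> J"
      using ideal_diff[OF J] k1J k2J x by blast
    then have fJ: "f x \<in> J" by (simp add: algebra_simps)
    then have "f x * g x \<in> J" using J unfolding is_ideal_def by blast
    then have "f x * g x - (f x * g x - x) \<in> J"
      using ideal_diff[OF J] k1J x by blast
    then show "x \<in> J" by simp
  qed
  have XeqJ: "X = J" using XJ JX by auto
  have J0: "0 \<in> J" using J unfolding is_ideal_def by simp
  define c where "c = g 0"
  have gc: "\<And>y. y \<in> J \<Longrightarrow> g y = c"
  proof -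
    fix y assume y: "y \<in> J"
    have "0 \<in> X" "y \<in> X" using J0 y XeqJ by auto
    then have "0 + y \<in> X \<longrightarrow> g (0 + y) = g 0" using ginv y by (meson bspec)
    then have "g (0 + y) = g 0" using \<open>y \<in> X\<close> by simp
    then show "g y = c" using c_def by simp
  qed
  have cI: "c \<in> I" using gX J0 XeqJ JI c_def by auto
  have ccomm: "\<And>z. z \<in> I \<Longrightarrow> c * z = z * c"
    using gcomm J0 XeqJ c_def by auto
  have sigJ: "\<And>x y. x \<in> J \<Longrightarrow> sig S I x y = y + y * x"
    unfolding sig_def using bulI JI by (auto simp: adj_def)
  have fJ: "\<And>y. y \<in> J \<Longrightarrow> f y \<in> J" using fX XeqJ by auto
  have feqJ: "\<And>z y. z \<in> J \<Longrightarrow> y \<in> J \<Longrightarrow> f (y + y * z) = f y + f y * z"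
  proof -
    fix z y assume z: "z \<in> J" and y: "y \<in> J"
    have "f (sig S I z y) = sig S I z (f y)" using feq z y XeqJ unfolding equivariant_def by blast
    then show "f (y + y * z) = f y + f y * z" using sigJ[OF z] by simp
  qed
  have ybJ: "\<And>p. p \<in> J \<times> J \<Longrightarrow> ybmap S I p = Rm (\<lambda>w. ev w m) p"
  proof -
    fix p assume p: "p \<in> J \<times> J"
    obtain x y where xy: "p = (x, y)" "x \<in> J" "y \<in> J" using p by auto
    have wJ: "y + y * x \<in> J" using ideal_rho2[OF J xy(3)] .
    have eJ: "ev (y + y * x) m \<in> J" using ev_I[OF J wJ] .
    show "ybmap S I p = Rm (\<lambda>w. ev w m) p"
    proof -
      have wI: "y + y * x \<in> I" using wJ JI by auto
      have eI: "ev (y + y * x) m \<in> I" using eJ JI by auto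
      have t: "tau S I y x = x + x * ev (y + y * x) m"
        unfolding tau_def sigJ[OF xy(2)] binvI[OF wI] bulI[OF eI] by (simp add: adj_def)
      show ?thesis unfolding ybmap_def Rm_def xy(1) using t sigJ[OF xy(2)] by simp
    qed
  qed
  have RJ: "\<And>p. p \<in> J \<times> J \<Longrightarrow> Rm (\<lambda>w. ev w m) p \<in> J \<times> J"
    unfolding Rm_def using ideal_rho2[OF J] by auto
  have gen: "\<And>k. (\<And>y. y \<in> J \<Longrightarrow> k y \<in> J) \<Longrightarrow>
      (\<And>z y. z \<in> J \<Longrightarrow> y \<in> J \<Longrightarrow> k (y + y * z) = k y + k y * z) \<Longrightarrow>
      is_reflection X (ybmap S I) k"
  proof -
    fix k :: "'a \<Rightarrow> 'a"
    assume kJ: "\<And>y. y \<in> J \<Longrightarrow> k y \<in> J"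
      and keq: "\<And>z y. z \<in> J \<Longrightarrow> y \<in> J \<Longrightarrow> k (y + y * z) = k y + k y * z"
    have idkJ: "\<And>p. p \<in> J \<times> J \<Longrightarrow> idk k p \<in> J \<times> J"
      unfolding idk_def using kJ by auto
    show "is_reflection X (ybmap S I) k"
      unfolding is_reflection_def XeqJ
    proof
      fix p assume p: "p \<in> J \<times> J"
      obtain x y where xy: "p = (x, y)" "x \<in> J" "y \<in> J" using p by auto
      have "Rm (\<lambda>w. ev w m) (idk k (Rm (\<lambda>w. ev w m) (idk k (x, y)))) =
          idk k (Rm (\<lambda>w. ev w m) (idk k (Rm (\<lambda>w. ev w m) (x, y))))"
        by (rule refl_generic[OF J _ _ kJ keq xy(2) xy(3)]) (auto intro: ev_I[OF J] inv2)
      then show "ybmap S I (idk k (ybmap S I (idk k p))) = idk k (ybmap S I (idk k (ybmap S I p)))"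
        using p xy(1) ybJ RJ idkJ by simp
    qed
  qed
  have k1: "is_reflection X (ybmap S I) (\<lambda>x. f x * g x)"
  proof (rule gen)
    fix y assume "y \<in> J" then show "f y * g y \<in> J" using fJ J unfolding is_ideal_def by blast
  next
    fix z y assume z: "z \<in> J" and y: "y \<in> J"
    have yz: "y + y * z \<in> J" using ideal_rho2[OF J y] .
    have "f (y + y * z) * g (y + y * z) = (f y + f y * z) * c" using feqJ[OF z y] gc[OF yz] by simp
    also have "\<dots> = f y * c + f y * (z * c)" by (simp add: algebra_simps)
    also have "\<dots> = f y * c + f y * (c * z)" using ccomm z JI by auto
    also have "\<dots> = f y * g y + f y * g y * z" using gc[OF y] by (simp add: mult.assoc)
    finally show "f (y + y * z) * g (y + y * z) = f y * g y + f y * g y * z" .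
  qed
  have k2: "is_reflection X (ybmap S I) (\<lambda>x. f x + f x * g x)"
  proof (rule gen)
    fix y assume "y \<in> J" then show "f y + f y * g y \<in> J" using fJ J unfolding is_ideal_def by blast
  next
    fix z y assume z: "z \<in> J" and y: "y \<in> J"
    have yz: "y + y * z \<in> J" using ideal_rho2[OF J y] .
    have "f (y + y * z) + f (y + y * z) * g (y + y * z) = (f y + f y * z) + (f y + f y * z) * c"
      using feqJ[OF z y] gc[OF yz] by simp
    also have "\<dots> = f y + f y * z + f y * c + f y * (z * c)" by (simp add: algebra_simps)
    also have "\<dots> = f y + f y * z + f y * c + f y * (c * z)" using ccomm z JI by auto
    also have "\<dots> = (f y + f y * g y) + (f y + f y * g y) * z" using gc[OF y] by (simp add: algebra_simps)
    finally show "f (y + y * z) + f (y + y * z) * g (y + y * z) = (f y + f y * g y) + (f y + f y * g y) * z" .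
  qed
  show ?thesis using uniq k1 k2 by simp
qed

end
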